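(* Let $G=(V,E)$ be an undirected graph without isolated vertices, let $v\in V$, and let $G_v$ be the subgraph of $G$ induced by the set of neighbors of $v$ (not including $v$). Then $\nu_v$ equals the fractional clique number of $G_v$ (equivalently, the fractional chromatic number of $G_v$).
   Context: Vertex Cover set system of $G$: agents are the vertices, feasible sets are the vertex covers of $G$. For a cost vector $c$ and $y(X)=\sum_{u\in X}y_u$: let $S$ be a vertex cover minimizing $c(S)$ (ties broken lexicographically); $\nu(c)$ is the maximum of $x(S)$ over $x\in\mathbb R^V$ subject to $x_u\ge c_u$ for all $u$, $x_u=c_u$ for $u\notin S$, and $x(S)\le x(T)$ for every vertex cover $T$. $\nu_v=\nu(\mathbf 1_v)$, where $\mathbf 1_v$ has $1$ at $v$ and $0$ elsewhere. The fractional clique number of a graph $H$ is the maximum of $\sum_u x_u$ subject to $x_u\ge 0$ and $\sum_{u\in I}x_u\le1$ for every independent set $I$ of $H$. *)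

theory Defs
  imports Complex_Main "HOL-Library.List_Lexorder"
begin

definition is_graph :: "'a set \<Rightarrow> ('a \<Rightarrow> 'a \<Rightarrow> bool) \<Rightarrow> bool" where
  "is_graph V E \<longleftrightarrow> finite V \<and> (\<forall>u w. E u w \<longrightarrow> u \<in> V \<and> w \<in> V)
     \<and> (\<forall>u w. E u w \<longrightarrow> E w u) \<and> (\<forall>u. \<not> E u u)"

definition no_isolated :: "'a set \<Rightarrow> ('a \<Rightarrow> 'a \<Rightarrow> bool) \<Rightarrow> bool" where
  "no_isolated V E \<longleftrightarrow> (\<forall>u\<in>V. \<exists>w. E u w)"

definition vertex_cover :: "'a set \<Rightarrow> ('a \<Rightarrow> 'a \<Rightarrow> bool) \<Rightarrow> 'a set \<Rightarrow> bool" where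
  "vertex_cover V E T \<longleftrightarrow> T \<subseteq> V \<and> (\<forall>u w. E u w \<longrightarrow> u \<in> T \<or> w \<in> T)"

definition min_cost_covers :: "'a set \<Rightarrow> ('a \<Rightarrow> 'a \<Rightarrow> bool) \<Rightarrow> ('a \<Rightarrow> real) \<Rightarrow> 'a set set" where
  "min_cost_covers V E c = {S. vertex_cover V E S \<and>
     (\<forall>T. vertex_cover V E T \<longrightarrow> sum c S \<le> sum c T)}"

definition lex_le :: "'a::linorder set \<Rightarrow> 'a set \<Rightarrow> bool" where
  "lex_le A B \<longleftrightarrow> sorted_list_of_set A \<le> sorted_list_of_set B"

definition chosen_cover :: "'a::linorder set \<Rightarrow> ('a \<Rightarrow> 'a \<Rightarrow> bool) \<Rightarrow> ('a \<Rightarrow> real) \<Rightarrow> 'a set" where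
  "chosen_cover V E c = (THE S. S \<in> min_cost_covers V E c \<and>
     (\<forall>T \<in> min_cost_covers V E c. lex_le S T))"

definition nu :: "'a::linorder set \<Rightarrow> ('a \<Rightarrow> 'a \<Rightarrow> bool) \<Rightarrow> ('a \<Rightarrow> real) \<Rightarrow> real" where
  "nu V E c = (let S = chosen_cover V E c in
     Greatest (\<lambda>r. \<exists>x :: 'a \<Rightarrow> real.
        (\<forall>u\<in>V. x u \<ge> c u) \<and> (\<forall>u\<in>V - S. x u = c u)
        \<and> (\<forall>T. vertex_cover V E T \<longrightarrow> sum x S \<le> sum x T)
        \<and> r = sum x S))"

definition unit_cost :: "'a \<Rightarrow> 'a \<Rightarrow> real" where
  "unit_cost v = (\<lambda>u. if u = v then 1 else 0)"

definition nu_v :: "'a::linorder set \<Rightarrow> ('a \<Rightarrow> 'a \<Rightarrow> bool) \<Rightarrow> 'a \<Rightarrow> real" where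
  "nu_v V E v = nu V E (unit_cost v)"

definition independent :: "'a set \<Rightarrow> ('a \<Rightarrow> 'a \<Rightarrow> bool) \<Rightarrow> 'a set \<Rightarrow> bool" where
  "independent W F I \<longleftrightarrow> I \<subseteq> W \<and> (\<forall>u\<in>I. \<forall>w\<in>I. \<not> F u w)"

definition frac_clique_number :: "'a set \<Rightarrow> ('a \<Rightarrow> 'a \<Rightarrow> bool) \<Rightarrow> real" where
  "frac_clique_number W F = Greatest (\<lambda>r. \<exists>x :: 'a \<Rightarrow> real.
      (\<forall>u\<in>W. x u \<ge> 0) \<and> (\<forall>I. independent W F I \<longrightarrow> sum x I \<le> 1)
      \<and> r = sum x W)"

definition neighbors :: "('a \<Rightarrow> 'a \<Rightarrow> bool) \<Rightarrow> 'a \<Rightarrow> 'a set" where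
  "neighbors E v = {u. E v u}"

definition induced :: "('a \<Rightarrow> 'a \<Rightarrow> bool) \<Rightarrow> 'a set \<Rightarrow> 'a \<Rightarrow> 'a \<Rightarrow> bool" where
  "induced E W = (\<lambda>u w. u \<in> W \<and> w \<in> W \<and> E u w)"

end

theory Submission
  imports Defs
begin

lemma chosen_in:
  fixes V :: "'a::linorder set"
  assumes fin: "finite V" and ne: "M \<noteq> {}" and sub: "M \<subseteq> Pow V"
  shows "(THE S. S \<in> M \<and> (\<forall>T\<in>M. lex_le S T)) \<in> M"
proof -
  have finM: "finite M" using sub fin by (meson finite_Pow_iff finite_subset)
  let ?L = "sorted_list_of_set ` M"
  have "finite ?L" "?L \<noteq> {}" using finM ne by auto
  then have "Min ?L \<in> ?L" by (rule Min_in)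
  then obtain S0 where S0: "S0 \<in> M" "Min ?L = sorted_list_of_set S0" by auto
  have finS: "\<And>A. A \<in> M \<Longrightarrow> finite A" using sub fin by (meson PowD finite_subset subsetD)
  have ex: "S0 \<in> M \<and> (\<forall>T\<in>M. lex_le S0 T)"
    using S0 \<open>finite ?L\<close> unfolding lex_le_def by (metis Min_le image_eqI)
  have uniq: "S1 = S0" if "S1 \<in> M \<and> (\<forall>T\<in>M. lex_le S1 T)" for S1
  proof -
    have "sorted_list_of_set S1 = sorted_list_of_set S0"
      using that ex unfolding lex_le_def by (meson order_antisym)
    then have "set (sorted_list_of_set S1) = set (sorted_list_of_set S0)" by simp
    moreover have "finite S1" using finS that by blast
    moreover have "finite S0" using finS S0(1) by blast
    ultimately show ?thesis by simp
  qed
  have "(THE S. S \<in> M \<and> (\<forall>T\<in>M. lex_le S T)) = S0"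
  proof (rule the_equality)
    show "S0 \<in> M \<and> (\<forall>T\<in>M. lex_le S0 T)" by (rule ex)
  next
    fix S1 assume "S1 \<in> M \<and> (\<forall>T\<in>M. lex_le S1 T)"
    then show "S1 = S0" by (rule uniq)
  qed
  then show ?thesis using S0 by simp
qed

theorem mainTheorem5:
  fixes V :: "'a::linorder set" and E :: "'a \<Rightarrow> 'a \<Rightarrow> bool" and v :: 'a
  assumes "is_graph V E" and "no_isolated V E" and "v \<in> V"
  shows "nu_v V E v = frac_clique_number (neighbors E v) (induced E (neighbors E v))"
proof -
  let ?c = "unit_cost v"
  define S where "S = chosen_cover V E ?c"
  define W where "W = neighbors E v"
  have finV: "finite V" and inV: "\<And>u w. E u w \<Longrightarrow> u \<in> V \<and> w \<in> V"
    and sym: "\<And>u w. E u w \<Longrightarrow> E w u" and irr: "\<And>u. \<not> E u u"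
    using assms(1) unfolding is_graph_def by auto
  have WV: "W \<subseteq> V" using inV unfolding W_def neighbors_def by auto
  have finW: "finite W" using WV finV finite_subset by blast
  have vW: "v \<notin> W" using irr unfolding W_def neighbors_def by auto
  have sumc: "\<And>A. finite A \<Longrightarrow> sum ?c A = (if v \<in> A then 1 else 0)"
    unfolding unit_cost_def by (simp add: sum.delta)
  have c0: "\<And>u. ?c u \<ge> 0" unfolding unit_cost_def by auto
  have cov: "\<And>T. vertex_cover V E T \<Longrightarrow> finite T"
    unfolding vertex_cover_def using finV finite_subset by blast
  have Vv: "vertex_cover V E (V - {v})"
    unfolding vertex_cover_def using inV irr by blast
  have Vvm: "V - {v} \<in> min_cost_covers V E ?c"
    unfolding min_cost_covers_def using Vv sumc finV c0
    by (auto intro: sum_nonneg)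
  have ne: "min_cost_covers V E ?c \<noteq> {}" using Vvm by blast
  have sb: "min_cost_covers V E ?c \<subseteq> Pow V"
    unfolding min_cost_covers_def vertex_cover_def by blast
  have "S \<in> min_cost_covers V E ?c"
    unfolding S_def chosen_cover_def
    by (rule chosen_in[OF finV ne sb])
  then have Scov: "vertex_cover V E S" and Smin: "\<And>T. vertex_cover V E T \<Longrightarrow> sum ?c S \<le> sum ?c T"
    unfolding min_cost_covers_def by auto
  have SV: "S \<subseteq> V" using Scov unfolding vertex_cover_def by auto
  have finS: "finite S" using Scov cov by blast
  have vS: "v \<notin> S"
    using Smin[OF Vv] sumc[OF finS] sumc[of "V - {v}"] finV by (auto split: if_splits)
  have WS: "W \<subseteq> S"
    using Scov vS unfolding vertex_cover_def W_def neighbors_def by blast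
  have key: "\<And>(x::'a \<Rightarrow> real) A. A \<subseteq> V \<Longrightarrow> sum x A = sum x V - sum x (V - A)"
  proof -
    fix x :: "'a \<Rightarrow> real" and A assume "A \<subseteq> V"
    then have "sum x (V - A) = sum x V - sum x A" by (rule sum_diff[OF finV])
    then show "sum x A = sum x V - sum x (V - A)" by simp
  qed
  have P: "(\<lambda>r. \<exists>x :: 'a \<Rightarrow> real.
        (\<forall>u\<in>V. x u \<ge> ?c u) \<and> (\<forall>u\<in>V - S. x u = ?c u)
        \<and> (\<forall>T. vertex_cover V E T \<longrightarrow> sum x S \<le> sum x T)
        \<and> r = sum x S) =
      (\<lambda>r. \<exists>x :: 'a \<Rightarrow> real.
      (\<forall>u\<in>W. x u \<ge> 0) \<and> (\<forall>I. independent W (induced E W) I \<longrightarrow> sum x I \<le> 1)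
      \<and> r = sum x W)"
  proof (intro ext iffI)
    fix r
    assume "\<exists>x :: 'a \<Rightarrow> real.
        (\<forall>u\<in>V. x u \<ge> ?c u) \<and> (\<forall>u\<in>V - S. x u = ?c u)
        \<and> (\<forall>T. vertex_cover V E T \<longrightarrow> sum x S \<le> sum x T)
        \<and> r = sum x S"
    then obtain x where x1: "\<forall>u\<in>V. x u \<ge> ?c u" and x2: "\<forall>u\<in>V - S. x u = ?c u"
      and x3: "\<forall>T. vertex_cover V E T \<longrightarrow> sum x S \<le> sum x T" and r: "r = sum x S" by blast
    have xVS: "sum x (V - S) = 1"
    proof -
      have "sum x (V - S) = sum ?c (V - S)" using x2 by (intro sum.cong) auto
      also have "\<dots> = 1" using sumc[of "V - S"] finV vS assms(3) by auto
      finally show ?thesis .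
    qed
    have xS: "sum x S = sum x V - 1" using key[OF SV] xVS by simp
    have xnn: "\<forall>u\<in>W. x u \<ge> 0" using x1 WV c0 by (meson order_trans subsetD)
    have ind: "sum x I \<le> 1" if "independent W (induced E W) I" for I
    proof -
      have IW: "I \<subseteq> W" and Ii: "\<forall>a\<in>I. \<forall>b\<in>I. \<not> induced E W a b"
        using that unfolding independent_def by auto
      have "vertex_cover V E (V - I)"
        unfolding vertex_cover_def using inV Ii IW unfolding induced_def by blast
      then have "sum x S \<le> sum x (V - I)" using x3 by blast
      moreover have "sum x (V - I) = sum x V - sum x I"
        using finV IW WV by (simp add: sum_diff)
      ultimately show ?thesis using xS by simp
    qed
    have zero: "x u = 0" if "u \<in> S - W" for u
    proof -
      have uv: "u \<noteq> v" using that vS by auto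
      have nE: "\<not> E u v" using that sym unfolding W_def neighbors_def by auto
      have "vertex_cover V E (V - {u, v})"
        unfolding vertex_cover_def using inV nE sym irr by blast
      then have "sum x S \<le> sum x (V - {u, v})" using x3 by blast
      moreover have "sum x (V - {u, v}) = sum x V - x u - x v"
      proof -
        have "{u, v} \<subseteq> V" using that SV assms(3) by auto
        then have "sum x (V - {u, v}) = sum x V - sum x {u, v}" by (rule sum_diff[OF finV])
        then show ?thesis using uv by simp
      qed
      moreover have "x v = 1" using x2 assms(3) vS unfolding unit_cost_def by auto
      moreover have "x u \<ge> 0" using x1 c0 that SV by (meson Diff_iff order_trans subsetD)
      ultimately show ?thesis using xS by simp
    qed
    have "sum x S = sum x W + sum x (S - W)"
      using finS WS by (metis add.commute sum.subset_diff)
    also have "sum x (S - W) = 0" using zero by simp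
    finally have "r = sum x W" using r by simp
    then show "\<exists>x :: 'a \<Rightarrow> real.
      (\<forall>u\<in>W. x u \<ge> 0) \<and> (\<forall>I. independent W (induced E W) I \<longrightarrow> sum x I \<le> 1)
      \<and> r = sum x W" using xnn ind by blast
  next
    fix r
    assume "\<exists>x :: 'a \<Rightarrow> real.
      (\<forall>u\<in>W. x u \<ge> 0) \<and> (\<forall>I. independent W (induced E W) I \<longrightarrow> sum x I \<le> 1)
      \<and> r = sum x W"
    then obtain y :: "'a \<Rightarrow> real" where y1: "\<forall>u\<in>W. y u \<ge> 0"
      and y2: "\<forall>I. independent W (induced E W) I \<longrightarrow> sum y I \<le> 1" and r: "r = sum y W" by blast
    define x where "x u = (if u \<in> W then y u else ?c u)" for u
    have xnn: "x u \<ge> 0" for u using y1 c0 unfolding x_def by auto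
    have c1: "\<forall>u\<in>V. x u \<ge> ?c u"
      using y1 vW unfolding x_def unit_cost_def by auto
    have c2: "\<forall>u\<in>V - S. x u = ?c u" using WS unfolding x_def by auto
    have xW: "sum x W = sum y W" unfolding x_def by simp
    have xSW: "sum x (S - W) = 0"
      unfolding x_def unit_cost_def using vS by (intro sum.neutral) auto
    have xS: "sum x S = sum x W"
      using sum.subset_diff[OF WS finS, of x] xSW by simp
    have c3: "sum x S \<le> sum x T" if T: "vertex_cover V E T" for T
    proof (cases "v \<in> T")
      case False
      have "W \<subseteq> T" using T False unfolding vertex_cover_def W_def neighbors_def by blast
      then have "sum x W \<le> sum x T" using cov[OF T] xnn by (intro sum_mono2) auto
      then show ?thesis using xS by simp
    next
      case True
      have finT: "finite T" using cov[OF T] .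
      have "independent W (induced E W) (W - T)"
        using T unfolding independent_def induced_def vertex_cover_def by blast
      then have "sum y (W - T) \<le> 1" using y2 by blast
      then have a: "sum x (W - T) \<le> 1" unfolding x_def by simp
      have b: "sum x W = sum x (W \<inter> T) + sum x (W - T)"
        using sum.Int_Diff[OF finW, of x T] .
      have d: "sum x T = sum x (T - {v}) + x v" using sum.remove[OF finT True, of x] by simp
      have xv: "x v = 1" using vW unfolding x_def unit_cost_def by simp
      have "W \<inter> T \<subseteq> T - {v}" using vW by auto
      then have "sum x (W \<inter> T) \<le> sum x (T - {v})" using finT xnn by (intro sum_mono2) auto
      then show ?thesis using xS a b d xv by simp
    qed
    show "\<exists>x :: 'a \<Rightarrow> real.
        (\<forall>u\<in>V. x u \<ge> ?c u) \<and> (\<forall>u\<in>V - S. x u = ?c u)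
        \<and> (\<forall>T. vertex_cover V E T \<longrightarrow> sum x S \<le> sum x T)
        \<and> r = sum x S"
      using c1 c2 c3 xS xW r by auto
  qed
  show ?thesis
    unfolding nu_v_def nu_def frac_clique_number_def Let_def S_def[symmetric] W_def[symmetric]
    by (simp only: P)
qed

end
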